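(* Equip $\mathfrak g$ with the quadratic bracket ${\rm PB}_2({\rm A}_1,{\rm A}_2,{\rm S})$. Let $\varphi$ be an Ad-invariant function on $\mathfrak g$ and $\psi(T)=\varphi(T\mathcal F^{-1})=\varphi(\mathcal F^{-1}T)$. Then the Hamiltonian equations of motion of $\psi$ read $\dot T=T\mathcal C_2-\mathcal C_1T$ with $\mathcal C_1=\frac12\mathcal F\,{\rm R}\big(\mathcal F^{-1}d\varphi(T\mathcal F^{-1})\big)$, $\mathcal C_2=\frac12{\rm R}\big(d\varphi(\mathcal F^{-1}T)\mathcal F^{-1}\big)\mathcal F$, where $d\varphi(Y)=Y\nabla\varphi(Y)$.
   Context: Periodic lattice setting: $N\ge2$; $\mathfrak g=\{X(\lambda)\in gl(N)[\lambda,\lambda^{-1}]:\Omega X(\lambda)\Omega^{-1}=X(\omega\lambda)\}$, $\omega=e^{2\pi i/N}$, $\Omega=\mathrm{diag}(1,\omega,\dots,\omega^{N-1})$, matrix indices modulo $N$; $\langle X,Y\rangle$ = coefficient of $\lambda^0$ in $\mathrm{tr}(XY)$. $\mathfrak g_p=\{\lambda^p\sum_{j-k\equiv p}x_{jk}E_{jk}\}$; $P_0,P_{>0},P_{\ge0},P_{<0}$ projections onto $\mathfrak g_0$, $\oplus_{p>0}\mathfrak g_p$, $\oplus_{p\ge0}\mathfrak g_p$, $\oplus_{p<0}\mathfrak g_p$; ${\rm R}=P_{\ge0}-P_{<0}$, ${\rm R}_0=P_{>0}-P_{<0}$; $W$ linear, $W=W\circ P_0$, $W(E_{kk})=\sum_j\mathrm{sgn}(k-j)E_{jj}$;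 ${\rm A}_1={\rm R}_0+W$, ${\rm A}_2={\rm R}_0-W$, ${\rm S}=P_0-W$, ${\rm S}^*=P_0+W$. Gradient: $\langle\nabla\varphi(L),M\rangle=\frac{d}{d\varepsilon}\varphi(L+\varepsilon M)|_{\varepsilon=0}$; $d\varphi(L)=L\nabla\varphi(L)$, $d'\varphi(L)=\nabla\varphi(L)L$; Ad-invariant: $[\nabla\varphi(L),L]=0$ for all $L$. ${\rm PB}_2({\rm A}_1,{\rm A}_2,{\rm S})$: $\{\varphi,\psi\}_2=\frac12\langle{\rm A}_1(d'\varphi),d'\psi\rangle-\frac12\langle{\rm A}_2(d\varphi),d\psi\rangle+\frac12\langle{\rm S}(d\varphi),d'\psi\rangle-\frac12\langle{\rm S}^*(d'\varphi),d\psi\rangle$. $\alpha$ real, $\mathcal F=I-\alpha\lambda\sum_kE_{k+1,k}$, $\mathcal F^{-1}$ a formal power series in $\lambda$. Hamiltonian flow of $H$: $\frac{d}{dt}f=\{H,f\}$. *)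

theory Defs
  imports Complex_Main
begin

text \<open>Twisted loop algebra over gl(N), completed to formal Laurent series in lambda
  that are bounded below.  A series is a coefficient function
  X p j k = entry (j,k) of the coefficient of lambda^p (indices j,k in {0..<N}).\<close>

type_synonym ser = "int \<Rightarrow> nat \<Rightarrow> nat \<Rightarrow> complex"

definition inS :: "nat \<Rightarrow> ser \<Rightarrow> bool" where
  "inS N X \<longleftrightarrow>
     (\<forall>p j k. X p j k \<noteq> 0 \<longrightarrow> j < N \<and> k < N \<and> int N dvd (int j - int k - p)) \<and>
     (\<exists>c. \<forall>p<c. \<forall>j k. X p j k = 0)"

text \<open>The loop algebra g itself: Laurent polynomials (finite support).\<close>
definition inG :: "nat \<Rightarrow> ser \<Rightarrow> bool" where
  "inG N X \<longleftrightarrow> inS N X \<and> (\<exists>d. \<forall>p>d. \<forall>j k. X p j k = 0)"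

definition lb :: "ser \<Rightarrow> int" where
  "lb X = (SOME c. \<forall>p<c. \<forall>j k. X p j k = 0)"

definition sadd :: "ser \<Rightarrow> ser \<Rightarrow> ser" where
  "sadd X Y = (\<lambda>p j k. X p j k + Y p j k)"

definition sdiff :: "ser \<Rightarrow> ser \<Rightarrow> ser" where
  "sdiff X Y = (\<lambda>p j k. X p j k - Y p j k)"

definition sscale :: "complex \<Rightarrow> ser \<Rightarrow> ser" where
  "sscale c X = (\<lambda>p j k. c * X p j k)"

definition smult :: "nat \<Rightarrow> ser \<Rightarrow> ser \<Rightarrow> ser" where
  "smult N X Y = (\<lambda>p j k. \<Sum>q\<in>{lb X..p - lb Y}. \<Sum>l<N. X q j l * Y (p - q) l k)"

definition sone :: "nat \<Rightarrow> ser" where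
  "sone N = (\<lambda>p j k. if p = 0 \<and> j = k \<and> j < N then 1 else 0)"

definition spair :: "nat \<Rightarrow> ser \<Rightarrow> ser \<Rightarrow> complex" where
  "spair N X Y = (\<Sum>j<N. smult N X Y 0 j j)"

definition P0 :: "ser \<Rightarrow> ser" where
  "P0 X = (\<lambda>p j k. if p = 0 then X p j k else 0)"
definition Pgt0 :: "ser \<Rightarrow> ser" where
  "Pgt0 X = (\<lambda>p j k. if p > 0 then X p j k else 0)"
definition Pge0 :: "ser \<Rightarrow> ser" where
  "Pge0 X = (\<lambda>p j k. if p \<ge> 0 then X p j k else 0)"
definition Plt0 :: "ser \<Rightarrow> ser" where
  "Plt0 X = (\<lambda>p j k. if p < 0 then X p j k else 0)"

definition Rop :: "ser \<Rightarrow> ser" where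
  "Rop X = sdiff (Pge0 X) (Plt0 X)"
definition R0op :: "ser \<Rightarrow> ser" where
  "R0op X = sdiff (Pgt0 X) (Plt0 X)"

text \<open>W = W o P0, W(E_kk) = sum_j sgn(k - j) E_jj.\<close>
definition Wop :: "nat \<Rightarrow> ser \<Rightarrow> ser" where
  "Wop N X = (\<lambda>p j k. if p = 0 \<and> j = k \<and> j < N
      then (\<Sum>i<N. of_int (sgn (int i - int j)) * X 0 i i) else 0)"

definition A1op :: "nat \<Rightarrow> ser \<Rightarrow> ser" where "A1op N X = sadd (R0op X) (Wop N X)"
definition A2op :: "nat \<Rightarrow> ser \<Rightarrow> ser" where "A2op N X = sdiff (R0op X) (Wop N X)"
definition Sop :: "nat \<Rightarrow> ser \<Rightarrow> ser" where "Sop N X = sdiff (P0 X) (Wop N X)"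
definition Sstar :: "nat \<Rightarrow> ser \<Rightarrow> ser" where "Sstar N X = sadd (P0 X) (Wop N X)"

definition Fmat :: "nat \<Rightarrow> real \<Rightarrow> ser" where
  "Fmat N \<alpha> = (\<lambda>p j k. (if p = 0 \<and> j = k \<and> j < N then 1 else 0)
       - (if p = 1 \<and> k < N \<and> j = (k + 1) mod N then complex_of_real \<alpha> else 0))"

definition Finv :: "nat \<Rightarrow> real \<Rightarrow> ser" where
  "Finv N \<alpha> = (THE Y. inS N Y \<and> smult N (Fmat N \<alpha>) Y = sone N \<and> smult N Y (Fmat N \<alpha>) = sone N)"

definition is_grad :: "nat \<Rightarrow> (ser \<Rightarrow> bool) \<Rightarrow> (ser \<Rightarrow> complex) \<Rightarrow> ser \<Rightarrow> ser \<Rightarrow> bool" where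
  "is_grad N D f L G \<longleftrightarrow> inS N G \<and>
     (\<forall>M. D M \<longrightarrow> ((\<lambda>e::real. f (sadd L (sscale (complex_of_real e) M)))
                      has_vector_derivative spair N G M) (at 0))"

definition grad :: "nat \<Rightarrow> (ser \<Rightarrow> bool) \<Rightarrow> (ser \<Rightarrow> complex) \<Rightarrow> ser \<Rightarrow> ser" where
  "grad N D f L = (SOME G. is_grad N D f L G)"

definition PB2 :: "nat \<Rightarrow> (ser \<Rightarrow> complex) \<Rightarrow> (ser \<Rightarrow> complex) \<Rightarrow> ser \<Rightarrow> complex" where
  "PB2 N f h L =
     (let X = grad N (inG N) f L; Y = grad N (inG N) h L;
          dX = smult N L X; d'X = smult N X L;
          dY = smult N L Y; d'Y = smult N Y L
      in (1/2) * spair N (A1op N d'X) d'Y - (1/2) * spair N (A2op N dX) dY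
         + (1/2) * spair N (Sop N dX) d'Y - (1/2) * spair N (Sstar N d'X) dY)"

end

theory Submission
  imports Defs
begin

definition zb :: "ser \<Rightarrow> int \<Rightarrow> bool" where
  "zb X a \<longleftrightarrow> (\<forall>p<a. \<forall>j k. X p j k = 0)"

definition tw :: "nat \<Rightarrow> ser \<Rightarrow> bool" where
  "tw N X \<longleftrightarrow> (\<forall>p j k. X p j k \<noteq> 0 \<longrightarrow> j < N \<and> k < N \<and> int N dvd (int j - int k - p))"

lemma inS_iff: "inS N X \<longleftrightarrow> tw N X \<and> (\<exists>c. zb X c)"
  unfolding inS_def tw_def zb_def by blast

lemma lb_zb: "\<exists>c. zb X c \<Longrightarrow> zb X (lb X)"
  unfolding lb_def zb_def by (rule someI_ex)

lemma zbD: "zb X a \<Longrightarrow> p < a \<Longrightarrow> X p j k = 0"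
  unfolding zb_def by blast

lemma smult_I:
  assumes X: "\<exists>c. zb X c" and Y: "\<exists>c. zb Y c" and fin: "finite I"
    and H: "\<And>q l. l < N \<Longrightarrow> X q j l * Y (p-q) l k \<noteq> 0 \<Longrightarrow> q \<in> I"
  shows "smult N X Y p j k = (\<Sum>q\<in>I. \<Sum>l<N. X q j l * Y (p-q) l k)"
proof -
  define g where "g q = (\<Sum>l<N. X q j l * Y (p-q) l k)" for q
  define J where "J = {lb X..p - lb Y}"
  have zX: "zb X (lb X)" using lb_zb[OF X] .
  have zY: "zb Y (lb Y)" using lb_zb[OF Y] .
  have "smult N X Y p j k = sum g J" unfolding smult_def g_def J_def by simp
  also have "\<dots> = sum g (I \<inter> J)"
  proof (rule sum.mono_neutral_right)
    show "\<forall>i\<in>J - I \<inter> J. g i = 0" unfolding g_def using H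
      by (auto intro!: sum.neutral)
  qed (auto simp: J_def)
  also have "\<dots> = sum g I"
  proof (rule sum.mono_neutral_left)
    show "\<forall>i\<in>I - I \<inter> J. g i = 0"
    proof
      fix q assume "q \<in> I - I \<inter> J"
      then have "q < lb X \<or> p - q < lb Y" by (auto simp: J_def)
      then show "g q = 0" unfolding g_def using zbD[OF zX] zbD[OF zY]
        by (auto intro!: sum.neutral)
    qed
  qed (use fin in auto)
  finally show ?thesis unfolding g_def .
qed

lemma sum_nz_ex: "(\<Sum>x\<in>A. f x) \<noteq> (0::complex) \<Longrightarrow> \<exists>x\<in>A. f x \<noteq> 0"
  by (meson sum.neutral)

lemma smult_zb:
  assumes "zb X a" "zb Y b" shows "zb (smult N X Y) (a+b)"
  unfolding zb_def
proof (intro allI impI)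
  fix p j k assume p: "p < a + b"
  have "smult N X Y p j k = (\<Sum>q\<in>{}. \<Sum>l<N. X q j l * Y (p-q) l k)"
  proof (rule smult_I)
    fix q l assume "X q j l * Y (p - q) l k \<noteq> 0"
    then have "X q j l \<noteq> 0" "Y (p-q) l k \<noteq> 0" by auto
    then have "q \<ge> a" "p - q \<ge> b" using zbD[OF assms(1)] zbD[OF assms(2)] by (meson not_less)+
    with p show "q \<in> {}" by simp
  qed (use assms in auto)
  then show "smult N X Y p j k = 0" by simp
qed

lemma smult_tw:
  assumes "tw N X" "tw N Y" shows "tw N (smult N X Y)"
  unfolding tw_def
proof (intro allI impI)
  fix p j k assume "smult N X Y p j k \<noteq> 0"
  then obtain q l where l: "l < N" and nz: "X q j l * Y (p-q) l k \<noteq> 0"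
    unfolding smult_def by (meson sum_nz_ex lessThan_iff)
  then have "X q j l \<noteq> 0" "Y (p-q) l k \<noteq> 0" by auto
  then have 1: "j < N \<and> l < N \<and> int N dvd (int j - int l - q)"
    and 2: "l < N \<and> k < N \<and> int N dvd (int l - int k - (p-q))"
    using assms unfolding tw_def by blast+
  have "int N dvd ((int j - int l - q) + (int l - int k - (p-q)))"
    using 1 2 by (intro dvd_add) auto
  moreover have "(int j - int l - q) + (int l - int k - (p-q)) = int j - int k - p" by simp
  ultimately show "j < N \<and> k < N \<and> int N dvd (int j - int k - p)" using 1 2 by metis
qed

lemma smult_inS: "inS N X \<Longrightarrow> inS N Y \<Longrightarrow> inS N (smult N X Y)"
  unfolding inS_iff using smult_tw smult_zb by blast

lemma smult_assoc:
  assumes X: "inS N X" and Y: "inS N Y" and Z: "inS N Z"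
  shows "smult N (smult N X Y) Z = smult N X (smult N Y Z)"
proof (intro ext)
  fix p j k
  obtain a where a: "zb X a" using X inS_iff by blast
  obtain b where b: "zb Y b" using Y inS_iff by blast
  obtain c where c: "zb Z c" using Z inS_iff by blast
  define Q where "Q = {a+b..p-c}"
  define J where "J = {a..p-b-c}"
  have ab: "zb (smult N X Y) (a+b)" using smult_zb[OF a b] .
  have bc: "zb (smult N Y Z) (b+c)" using smult_zb[OF b c] .
  have L1: "smult N (smult N X Y) Z p j k = (\<Sum>q\<in>Q. \<Sum>l<N. smult N X Y q j l * Z (p-q) l k)"
  proof (rule smult_I)
    fix q l assume "smult N X Y q j l * Z (p - q) l k \<noteq> 0"
    then have "smult N X Y q j l \<noteq> 0" "Z (p-q) l k \<noteq> 0" by auto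
    then have "q \<ge> a+b" "p - q \<ge> c" using zbD[OF ab] zbD[OF c] by (meson not_less)+
    then show "q \<in> Q" by (simp add: Q_def)
  qed (use ab c in \<open>auto simp: Q_def\<close>)
  have L2: "smult N X Y q j l = (\<Sum>r\<in>J. \<Sum>m<N. X r j m * Y (q-r) m l)" if q: "q \<in> Q" for q l
  proof (rule smult_I)
    fix r m assume "X r j m * Y (q - r) m l \<noteq> 0"
    then have "X r j m \<noteq> 0" "Y (q-r) m l \<noteq> 0" by auto
    then have "r \<ge> a" "q - r \<ge> b" using zbD[OF a] zbD[OF b] by (meson not_less)+
    then show "r \<in> J" using q by (simp add: Q_def J_def)
  qed (use a b in \<open>auto simp: J_def\<close>)
  have R1: "smult N X (smult N Y Z) p j k = (\<Sum>r\<in>J. \<Sum>m<N. X r j m * smult N Y Z (p-r) m k)"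
  proof (rule smult_I)
    fix r m assume "X r j m * smult N Y Z (p-r) m k \<noteq> 0"
    then have "X r j m \<noteq> 0" "smult N Y Z (p-r) m k \<noteq> 0" by auto
    then have "r \<ge> a" "p - r \<ge> b+c" using zbD[OF a] zbD[OF bc] by (meson not_less)+
    then show "r \<in> J" by (simp add: J_def)
  qed (use a bc in \<open>auto simp: J_def\<close>)
  have R2: "smult N Y Z (p-r) m k = (\<Sum>q\<in>Q. \<Sum>l<N. Y (q-r) m l * Z (p-q) l k)" if r: "r \<in> J" for r m
  proof -
    have "smult N Y Z (p-r) m k = (\<Sum>s\<in>(\<lambda>q. q - r) ` Q. \<Sum>l<N. Y s m l * Z (p-r-s) l k)"
    proof (rule smult_I)
      fix s l assume "Y s m l * Z (p - r - s) l k \<noteq> 0"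
      then have "Y s m l \<noteq> 0" "Z (p-r-s) l k \<noteq> 0" by auto
      then have "s \<ge> b" "p - r - s \<ge> c" using zbD[OF b] zbD[OF c] by (meson not_less)+
      then have "s + r \<in> Q" using r by (simp add: Q_def J_def)
      then show "s \<in> (\<lambda>q. q - r) ` Q" by (intro image_eqI[of _ _ "s+r"]) auto
    qed (use b c in \<open>auto simp: Q_def\<close>)
    also have "\<dots> = (\<Sum>q\<in>Q. \<Sum>l<N. Y (q-r) m l * Z (p-q) l k)"
      by (subst sum.reindex) (auto simp: inj_on_def)
    finally show ?thesis .
  qed
  have "smult N (smult N X Y) Z p j k = (\<Sum>q\<in>Q. \<Sum>l<N. (\<Sum>r\<in>J. \<Sum>m<N. X r j m * Y (q-r) m l) * Z (p-q) l k)"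
    using L1 L2 by simp
  also have "\<dots> = (\<Sum>q\<in>Q. \<Sum>l<N. \<Sum>r\<in>J. \<Sum>m<N. X r j m * Y (q-r) m l * Z (p-q) l k)"
    by (simp add: sum_distrib_right)
  also have "\<dots> = (\<Sum>r\<in>J. \<Sum>m<N. \<Sum>q\<in>Q. \<Sum>l<N. X r j m * Y (q-r) m l * Z (p-q) l k)"
    by (subst sum.swap) (subst (2) sum.swap, subst (3) sum.swap, subst (4) sum.swap, simp)
  also have "\<dots> = (\<Sum>r\<in>J. \<Sum>m<N. X r j m * (\<Sum>q\<in>Q. \<Sum>l<N. Y (q-r) m l * Z (p-q) l k))"
    by (simp add: sum_distrib_left mult.assoc)
  also have "\<dots> = smult N X (smult N Y Z) p j k"
    using R1 R2 by simp
  finally show "smult N (smult N X Y) Z p j k = smult N X (smult N Y Z) p j k" .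
qed

lemma zb_mono: "zb X a \<Longrightarrow> a' \<le> a \<Longrightarrow> zb X a'"
  unfolding zb_def by auto

lemma zb_lin: "zb X a \<Longrightarrow> zb Y a \<Longrightarrow> zb (\<lambda>p j k. u * X p j k + v * Y p j k) a"
  unfolding zb_def by auto

lemma smult_lin_left:
  assumes X: "zb X a" and Y: "zb Y a" and Z: "zb Z c"
  shows "smult N (\<lambda>p j k. u * X p j k + v * Y p j k) Z
       = (\<lambda>p j k. u * smult N X Z p j k + v * smult N Y Z p j k)"
proof (intro ext)
  fix p j k
  define I where "I = {a..p-c}"
  have H: "smult N W Z p j k = (\<Sum>q\<in>I. \<Sum>l<N. W q j l * Z (p-q) l k)" if W: "zb W a" for W
  proof (rule smult_I)
    fix q l assume "W q j l * Z (p - q) l k \<noteq> 0"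
    then have "W q j l \<noteq> 0" "Z (p-q) l k \<noteq> 0" by auto
    then have "q \<ge> a" "p - q \<ge> c" using zbD[OF W] zbD[OF Z] by (meson not_less)+
    then show "q \<in> I" by (simp add: I_def)
  qed (use W Z in \<open>auto simp: I_def\<close>)
  show "smult N (\<lambda>p j k. u * X p j k + v * Y p j k) Z p j k = u * smult N X Z p j k + v * smult N Y Z p j k"
    by (simp add: H[OF zb_lin[OF X Y]] H[OF X] H[OF Y] sum_distrib_left sum.distrib algebra_simps)
qed

lemma smult_lin_right:
  assumes X: "zb X a" and Y: "zb Y c" and Z: "zb Z c"
  shows "smult N X (\<lambda>p j k. u * Y p j k + v * Z p j k)
       = (\<lambda>p j k. u * smult N X Y p j k + v * smult N X Z p j k)"
proof (intro ext)
  fix p j k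
  define I where "I = {a..p-c}"
  have H: "smult N X W p j k = (\<Sum>q\<in>I. \<Sum>l<N. X q j l * W (p-q) l k)" if W: "zb W c" for W
  proof (rule smult_I)
    fix q l assume "X q j l * W (p - q) l k \<noteq> 0"
    then have "X q j l \<noteq> 0" "W (p-q) l k \<noteq> 0" by auto
    then have "q \<ge> a" "p - q \<ge> c" using zbD[OF X] zbD[OF W] by (meson not_less)+
    then show "q \<in> I" by (simp add: I_def)
  qed (use W X in \<open>auto simp: I_def\<close>)
  show "smult N X (\<lambda>p j k. u * Y p j k + v * Z p j k) p j k = u * smult N X Y p j k + v * smult N X Z p j k"
    by (simp add: H[OF zb_lin[OF Y Z]] H[OF Y] H[OF Z] sum_distrib_left sum.distrib algebra_simps)
qed

lemma inS_zb: "inS N X \<Longrightarrow> \<exists>c. zb X c" by (simp add: inS_iff)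

lemma inS_zb2:
  assumes "inS N X" "inS N Y" obtains a where "zb X a" "zb Y a"
proof -
  obtain a b where "zb X a" "zb Y b" using assms inS_iff by blast
  then show ?thesis using that[of "min a b"] zb_mono by (metis min.cobounded1 min.cobounded2)
qed

lemma sadd_lin: "sadd X Y = (\<lambda>p j k. 1 * X p j k + 1 * Y p j k)" by (simp add: sadd_def)
lemma sdiff_lin: "sdiff X Y = (\<lambda>p j k. 1 * X p j k + (-1) * Y p j k)" by (simp add: sdiff_def)
lemma sscale_lin: "sscale c X = (\<lambda>p j k. c * X p j k + 0 * X p j k)" by (simp add: sscale_def)

lemma smult_sadd_left: assumes "inS N X" "inS N Y" "inS N Z"
  shows "smult N (sadd X Y) Z = sadd (smult N X Z) (smult N Y Z)"
proof -
  obtain a where a: "zb X a" "zb Y a" using inS_zb2[OF assms(1,2)] .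
  obtain c where c: "zb Z c" using inS_zb[OF assms(3)] by blast
  show ?thesis unfolding sadd_lin by (rule smult_lin_left[OF a c])
qed
lemma smult_sdiff_left: assumes "inS N X" "inS N Y" "inS N Z"
  shows "smult N (sdiff X Y) Z = sdiff (smult N X Z) (smult N Y Z)"
proof -
  obtain a where a: "zb X a" "zb Y a" using inS_zb2[OF assms(1,2)] .
  obtain c where c: "zb Z c" using inS_zb[OF assms(3)] by blast
  show ?thesis unfolding sdiff_lin by (rule smult_lin_left[OF a c])
qed
lemma smult_sscale_left: assumes "inS N X" "inS N Z"
  shows "smult N (sscale c X) Z = sscale c (smult N X Z)"
proof -
  obtain a where a: "zb X a" using inS_zb[OF assms(1)] by blast
  obtain c where c: "zb Z c" using inS_zb[OF assms(2)] by blast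
  show ?thesis unfolding sscale_lin by (rule smult_lin_left[OF a a c])
qed
lemma smult_sadd_right: assumes "inS N X" "inS N Y" "inS N Z"
  shows "smult N X (sadd Y Z) = sadd (smult N X Y) (smult N X Z)"
proof -
  obtain a where a: "zb Y a" "zb Z a" using inS_zb2[OF assms(2,3)] .
  obtain c where c: "zb X c" using inS_zb[OF assms(1)] by blast
  show ?thesis unfolding sadd_lin by (rule smult_lin_right[OF c a])
qed
lemma smult_sdiff_right: assumes "inS N X" "inS N Y" "inS N Z"
  shows "smult N X (sdiff Y Z) = sdiff (smult N X Y) (smult N X Z)"
proof -
  obtain a where a: "zb Y a" "zb Z a" using inS_zb2[OF assms(2,3)] .
  obtain c where c: "zb X c" using inS_zb[OF assms(1)] by blast
  show ?thesis unfolding sdiff_lin by (rule smult_lin_right[OF c a])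
qed
lemma smult_sscale_right: assumes "inS N X" "inS N Y"
  shows "smult N X (sscale c Y) = sscale c (smult N X Y)"
proof -
  obtain a where a: "zb Y a" using inS_zb[OF assms(2)] by blast
  obtain c where c: "zb X c" using inS_zb[OF assms(1)] by blast
  show ?thesis unfolding sscale_lin by (rule smult_lin_right[OF c a a])
qed

lemma inS_lin: assumes "inS N X" "inS N Y"
  shows "inS N (\<lambda>p j k. u * X p j k + v * Y p j k)"
proof -
  obtain a where a: "zb X a" "zb Y a" using inS_zb2[OF assms] .
  have "tw N (\<lambda>p j k. u * X p j k + v * Y p j k)"
    using assms unfolding inS_iff tw_def by (metis add.right_neutral mult_zero_right)
  then show ?thesis using zb_lin[OF a] inS_iff by blast
qed

lemma inS_sadd: "inS N X \<Longrightarrow> inS N Y \<Longrightarrow> inS N (sadd X Y)"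
  unfolding sadd_lin by (rule inS_lin)
lemma inS_sdiff: "inS N X \<Longrightarrow> inS N Y \<Longrightarrow> inS N (sdiff X Y)"
  unfolding sdiff_lin by (rule inS_lin)
lemma inS_sscale: "inS N X \<Longrightarrow> inS N (sscale c X)"
  unfolding sscale_lin by (rule inS_lin)

lemma inS_restr: assumes "inS N X" shows "inS N (\<lambda>p j k. if P p then X p j k else 0)"
proof -
  obtain a where "zb X a" using assms inS_iff by blast
  then have "zb (\<lambda>p j k. if P p then X p j k else 0) a" unfolding zb_def by auto
  moreover have "tw N (\<lambda>p j k. if P p then X p j k else 0)"
    using assms unfolding inS_iff tw_def by auto
  ultimately show ?thesis using inS_iff by blast
qed

lemma inS_P0: "inS N X \<Longrightarrow> inS N (P0 X)" unfolding P0_def by (rule inS_restr)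
lemma inS_Pgt0: "inS N X \<Longrightarrow> inS N (Pgt0 X)" unfolding Pgt0_def by (rule inS_restr)
lemma inS_Pge0: "inS N X \<Longrightarrow> inS N (Pge0 X)" unfolding Pge0_def by (rule inS_restr)
lemma inS_Plt0: "inS N X \<Longrightarrow> inS N (Plt0 X)" unfolding Plt0_def by (rule inS_restr)
lemma inS_Rop: "inS N X \<Longrightarrow> inS N (Rop X)"
  unfolding Rop_def by (intro inS_sdiff inS_Pge0 inS_Plt0)
lemma inS_R0op: "inS N X \<Longrightarrow> inS N (R0op X)"
  unfolding R0op_def by (intro inS_sdiff inS_Pgt0 inS_Plt0)

lemma inS_diag0: "inS N (\<lambda>p j k. if p = 0 \<and> j = k \<and> j < N then f j else 0)"
  unfolding inS_iff tw_def zb_def by (auto intro!: exI[of _ 0])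

lemma inS_Wop: "inS N (Wop N X)"
  unfolding Wop_def by (rule inS_diag0)
lemma inS_sone: "inS N (sone N)"
  unfolding sone_def using inS_diag0[of N "\<lambda>_. 1"] .

lemma inS_A1: "inS N X \<Longrightarrow> inS N (A1op N X)"
  unfolding A1op_def by (intro inS_sadd inS_R0op inS_Wop)
lemma inS_A2: "inS N X \<Longrightarrow> inS N (A2op N X)"
  unfolding A2op_def by (intro inS_sdiff inS_R0op inS_Wop)
lemma inS_S: "inS N X \<Longrightarrow> inS N (Sop N X)"
  unfolding Sop_def by (intro inS_sdiff inS_P0 inS_Wop)
lemma inS_Sstar: "inS N X \<Longrightarrow> inS N (Sstar N X)"
  unfolding Sstar_def by (intro inS_sadd inS_P0 inS_Wop)

lemma inS_jN: "inS N X \<Longrightarrow> \<not> j < N \<Longrightarrow> X p j k = 0"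
  unfolding inS_iff tw_def by blast
lemma inS_kN: "inS N X \<Longrightarrow> \<not> k < N \<Longrightarrow> X p j k = 0"
  unfolding inS_iff tw_def by blast

lemma smult_sone_left: assumes X: "inS N X" shows "smult N (sone N) X = X"
proof (intro ext)
  fix p j k
  have "smult N (sone N) X p j k = (\<Sum>q\<in>{0}. \<Sum>l<N. sone N q j l * X (p-q) l k)"
    by (rule smult_I) (use X inS_sone in \<open>auto simp: inS_iff sone_def split: if_splits\<close>)
  also have "\<dots> = X p j k" using inS_jN[OF X, of j p k]
    by (cases "j < N") (auto simp: sone_def if_distrib[where f="\<lambda>x. x * _"] cong: if_cong)
  finally show "smult N (sone N) X p j k = X p j k" .
qed

lemma smult_sone_right: assumes X: "inS N X" shows "smult N X (sone N) = X"
proof (intro ext)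
  fix p j k
  have "smult N X (sone N) p j k = (\<Sum>q\<in>{p}. \<Sum>l<N. X q j l * sone N (p-q) l k)"
    by (rule smult_I) (use X inS_sone in \<open>auto simp: inS_iff sone_def split: if_splits\<close>)
  also have "\<dots> = X p j k" using inS_kN[OF X, of k p j]
    by (auto simp: sone_def if_distrib cong: if_cong)
  finally show "smult N X (sone N) p j k = X p j k" .
qed

lemma spair_sym: assumes X: "inS N X" and Y: "inS N Y" shows "spair N X Y = spair N Y X"
proof -
  obtain a where a: "zb X a" using X inS_iff by blast
  obtain b where b: "zb Y b" using Y inS_iff by blast
  define I where "I = {a..-b}"
  have 1: "smult N X Y 0 j j = (\<Sum>q\<in>I. \<Sum>l<N. X q j l * Y (-q) l j)" for j
  proof -
    have "smult N X Y 0 j j = (\<Sum>q\<in>I. \<Sum>l<N. X q j l * Y (0-q) l j)"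
    proof (rule smult_I)
      fix q l assume "X q j l * Y (0 - q) l j \<noteq> 0"
      then have "X q j l \<noteq> 0" "Y (0-q) l j \<noteq> 0" by auto
      then have "q \<ge> a" "0 - q \<ge> b" using zbD[OF a] zbD[OF b] by (meson not_less)+
      then show "q \<in> I" by (simp add: I_def)
    qed (use a b in \<open>auto simp: I_def\<close>)
    then show ?thesis by simp
  qed
  have 2: "smult N Y X 0 j j = (\<Sum>q\<in>I. \<Sum>l<N. Y (-q) j l * X q l j)" for j
  proof -
    have "smult N Y X 0 j j = (\<Sum>q\<in>uminus ` I. \<Sum>l<N. Y q j l * X (0-q) l j)"
    proof (rule smult_I)
      fix q l assume "Y q j l * X (0 - q) l j \<noteq> 0"
      then have "Y q j l \<noteq> 0" "X (0-q) l j \<noteq> 0" by auto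
      then have "q \<ge> b" "0 - q \<ge> a" using zbD[OF a] zbD[OF b] by (meson not_less)+
      then show "q \<in> uminus ` I" by (intro image_eqI[of _ _ "-q"]) (auto simp: I_def)
    qed (use a b in \<open>auto simp: I_def\<close>)
    also have "\<dots> = (\<Sum>q\<in>I. \<Sum>l<N. Y (-q) j l * X q l j)"
      by (subst sum.reindex) (auto simp: inj_on_def)
    finally show ?thesis .
  qed
  have "spair N X Y = (\<Sum>j<N. \<Sum>q\<in>I. \<Sum>l<N. X q j l * Y (-q) l j)"
    unfolding spair_def using 1 by simp
  also have "\<dots> = (\<Sum>q\<in>I. \<Sum>j<N. \<Sum>l<N. X q j l * Y (-q) l j)"
    by (rule sum.swap)
  also have "\<dots> = (\<Sum>q\<in>I. \<Sum>l<N. \<Sum>j<N. Y (-q) l j * X q j l)"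
    by (subst (2) sum.swap) (simp add: mult.commute)
  also have "\<dots> = (\<Sum>j<N. \<Sum>q\<in>I. \<Sum>l<N. Y (-q) j l * X q l j)"
    by (rule sum.swap[symmetric])
  also have "\<dots> = spair N Y X"
    unfolding spair_def using 2 by simp
  finally show ?thesis .
qed

lemma spair_lin_right:
  assumes X: "inS N X" and Y: "inS N Y" and Z: "inS N Z"
  shows "spair N X (\<lambda>p j k. u * Y p j k + v * Z p j k) = u * spair N X Y + v * spair N X Z"
proof -
  obtain a where a: "zb Y a" "zb Z a" using inS_zb2[OF Y Z] .
  obtain c where c: "zb X c" using X inS_iff by blast
  show ?thesis unfolding spair_def smult_lin_right[OF c a]
    by (simp add: sum.distrib sum_distrib_left)
qed

lemma spair_sadd_right: "inS N X \<Longrightarrow> inS N Y \<Longrightarrow> inS N Z \<Longrightarrow>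
  spair N X (sadd Y Z) = spair N X Y + spair N X Z"
  unfolding sadd_lin using spair_lin_right[of N X Y Z 1 1] by simp
lemma spair_sdiff_right: "inS N X \<Longrightarrow> inS N Y \<Longrightarrow> inS N Z \<Longrightarrow>
  spair N X (sdiff Y Z) = spair N X Y - spair N X Z"
  unfolding sdiff_lin using spair_lin_right[of N X Y Z 1 "-1"] by simp
lemma spair_sscale_right: "inS N X \<Longrightarrow> inS N Y \<Longrightarrow>
  spair N X (sscale c Y) = c * spair N X Y"
  unfolding sscale_lin using spair_lin_right[of N X Y Y c 0] by simp

lemma spair_assoc: "inS N X \<Longrightarrow> inS N Y \<Longrightarrow> inS N Z \<Longrightarrow>
  spair N (smult N X Y) Z = spair N X (smult N Y Z)"
  unfolding spair_def by (simp add: smult_assoc)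

lemma hvd_unique:
  assumes "(f has_vector_derivative a) (at (0::real))" "(f has_vector_derivative b) (at 0)"
  shows "a = b"
proof -
  have "(\<lambda>x. x *\<^sub>R a) = (\<lambda>x. x *\<^sub>R b)"
    using assms unfolding has_vector_derivative_def by (rule has_derivative_unique)
  then show ?thesis by (metis scaleR_one)
qed

lemma inG_lin: assumes "inG N X" "inG N Y" shows "inG N (\<lambda>p j k. u * X p j k + v * Y p j k)"
proof -
  obtain d1 where d1: "\<forall>p>d1. \<forall>j k. X p j k = 0" using assms(1) inG_def by blast
  obtain d2 where d2: "\<forall>p>d2. \<forall>j k. Y p j k = 0" using assms(2) inG_def by blast
  have "\<forall>p>max d1 d2. \<forall>j k. u * X p j k + v * Y p j k = 0" using d1 d2 by auto
  moreover have "inS N (\<lambda>p j k. u * X p j k + v * Y p j k)"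
    using assms inG_def inS_lin by blast
  ultimately show ?thesis unfolding inG_def by blast
qed

lemma inG_inS: "inG N X \<Longrightarrow> inS N X" by (simp add: inG_def)

lemma inG_sadd_sscale: "inG N T \<Longrightarrow> inG N M \<Longrightarrow> inG N (sadd T (sscale c M))"
proof -
  assume "inG N T" "inG N M"
  from inG_lin[OF this, of 1 c] show ?thesis by (simp add: sadd_def sscale_def)
qed

definition Mel :: "int \<Rightarrow> nat \<Rightarrow> nat \<Rightarrow> ser" where
  "Mel p0 j0 k0 = (\<lambda>p j k. if p = -p0 \<and> j = k0 \<and> k = j0 then 1 else 0)"

lemma Mel_inG: assumes "j0 < N" "k0 < N" "int N dvd (int j0 - int k0 - p0)"
  shows "inG N (Mel p0 j0 k0)"
proof -
  have "int N dvd - (int j0 - int k0 - p0)" using assms(3) by (simp only: dvd_minus_iff)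
  moreover have "- (int j0 - int k0 - p0) = int k0 - int j0 - (-p0)" by simp
  ultimately have "int N dvd (int k0 - int j0 - (-p0))" by metis
  then show ?thesis using assms unfolding inG_def inS_def Mel_def
    by (auto intro!: exI[of _ "-p0"])
qed

lemma spair_Mel: assumes G: "inS N G" and "j0 < N" "k0 < N"
  shows "spair N G (Mel p0 j0 k0) = G p0 j0 k0"
proof -
  have MS: "\<exists>c. zb (Mel p0 j0 k0) c" unfolding zb_def Mel_def by (auto intro!: exI[of _ "-p0"])
  have "smult N G (Mel p0 j0 k0) 0 j j = (\<Sum>q\<in>{p0}. \<Sum>l<N. G q j l * Mel p0 j0 k0 (0-q) l j)" for j
    by (rule smult_I) (use G MS in \<open>auto simp: inS_iff Mel_def split: if_splits\<close>)
  then have "smult N G (Mel p0 j0 k0) 0 j j = (if j = j0 then G p0 j k0 else 0)" for j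
    using assms by (auto simp: Mel_def if_distrib[where f="\<lambda>x. _ * x"] cong: if_cong)
  then show ?thesis using assms unfolding spair_def by simp
qed

lemma grad_unique:
  assumes G1: "is_grad N (inG N) f T G1" and G2: "is_grad N (inG N) f T G2"
  shows "G1 = G2"
proof (intro ext)
  fix p0 j0 k0
  have S1: "inS N G1" and S2: "inS N G2" using G1 G2 is_grad_def by auto
  have eq: "spair N G1 M = spair N G2 M" if "inG N M" for M
    using G1 G2 that unfolding is_grad_def by (meson hvd_unique)
  show "G1 p0 j0 k0 = G2 p0 j0 k0"
  proof (rule ccontr)
    assume ne: "G1 p0 j0 k0 \<noteq> G2 p0 j0 k0"
    then have "G1 p0 j0 k0 \<noteq> 0 \<or> G2 p0 j0 k0 \<noteq> 0" by auto
    then have t: "j0 < N \<and> k0 < N \<and> int N dvd (int j0 - int k0 - p0)"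
      using S1 S2 unfolding inS_def by blast
    then have "spair N G1 (Mel p0 j0 k0) = spair N G2 (Mel p0 j0 k0)"
      using eq Mel_inG by blast
    then show False using ne t spair_Mel[OF S1] spair_Mel[OF S2] by simp
  qed
qed

lemma grad_eqI: "is_grad N (inG N) f T G \<Longrightarrow> grad N (inG N) f T = G"
  unfolding grad_def by (rule some_equality) (auto intro: grad_unique)

lemma modpred: fixes j l N :: nat assumes "j < N" "l < N" shows "j = (l+1) mod N \<longleftrightarrow> l = (j+N-1) mod N"
proof (cases "j = 0")
  case True
  have "(l+1) mod N = 0 \<longleftrightarrow> l = N - 1"
  proof
    assume "(l+1) mod N = 0"
    then have "N dvd l + 1" by auto
    then have "N \<le> l + 1" by (simp add: dvd_imp_le)
    then show "l = N - 1" using assms(2) by simp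
  next
    assume "l = N - 1" then show "(l+1) mod N = 0" using assms by simp
  qed
  moreover have "(j + N - 1) mod N = N - 1" using True assms by simp
  ultimately show ?thesis using True by simp
next
  case False
  have a: "(j + N - 1) mod N = j - 1"
  proof -
    have "j + N - 1 = (j - 1) + N" using False by simp
    then have "(j + N - 1) mod N = ((j - 1) + N) mod N" by simp
    also have "\<dots> = (j - 1) mod N" by (rule mod_add_self2)
    also have "\<dots> = j - 1" using assms by simp
    finally show ?thesis .
  qed
  have b: "(l+1) mod N = j \<longleftrightarrow> l + 1 = j"
  proof
    assume h: "(l+1) mod N = j"
    show "l + 1 = j"
    proof (cases "l + 1 < N")
      case True then show ?thesis using h by simp
    next
      case False
      then have "l + 1 = N" using assms by simp
      then show ?thesis using h \<open>j \<noteq> 0\<close> by simp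
    qed
  next
    assume "l + 1 = j" then show "(l+1) mod N = j" using assms by simp
  qed
  show ?thesis using a b False by auto
qed

lemma dvd_mod_diff: "int N dvd (int (m mod N) - int m)"
  by (metis dvd_minus_mod minus_diff_eq dvd_minus_iff of_nat_mod zmod_int)

lemma inS_Fmat: "inS N (Fmat N \<alpha>)"
proof -
  have "tw N (Fmat N \<alpha>)" unfolding tw_def
  proof (intro allI impI)
    fix p j k assume h: "Fmat N \<alpha> p j k \<noteq> 0"
    show "j < N \<and> k < N \<and> int N dvd (int j - int k - p)"
    proof (cases "p = 0 \<and> j = k \<and> j < N")
      case True then show ?thesis by simp
    next
      case False
      then have "p = 1 \<and> k < N \<and> j = (k+1) mod N" using h by (auto simp: Fmat_def split: if_splits)
      moreover have d: "int N dvd (int ((k+1) mod N) - int (k+1))" by (rule dvd_mod_diff)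
      moreover have e: "int ((k+1) mod N) - int (k+1) = int ((k+1) mod N) - int k - 1" by simp
      moreover have "(k+1) mod N < N" using \<open>p = 1 \<and> k < N \<and> j = (k+1) mod N\<close> by simp
      ultimately show ?thesis by (simp only: e)
    qed
  qed
  moreover have "zb (Fmat N \<alpha>) 0" unfolding zb_def Fmat_def by auto
  ultimately show ?thesis using inS_iff by blast
qed

lemma Fmat_nz: "Fmat N \<alpha> p l k \<noteq> 0 \<Longrightarrow> p = 0 \<or> p = 1"
  unfolding Fmat_def by (auto split: if_splits)

lemma smult_XF: assumes X: "inS N X"
  shows "smult N X (Fmat N \<alpha>) p j k =
    (if k < N then X p j k - complex_of_real \<alpha> * X (p-1) j ((k+1) mod N) else 0)"
proof -
  have "smult N X (Fmat N \<alpha>) p j k = (\<Sum>q\<in>{p, p-1}. \<Sum>l<N. X q j l * Fmat N \<alpha> (p-q) l k)"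
  proof (rule smult_I)
    fix q l assume "X q j l * Fmat N \<alpha> (p - q) l k \<noteq> 0"
    then have "Fmat N \<alpha> (p - q) l k \<noteq> 0" by auto
    then have "p - q = 0 \<or> p - q = 1" by (rule Fmat_nz)
    then show "q \<in> {p, p-1}" by auto
  qed (use X inS_Fmat in \<open>auto simp: inS_iff\<close>)
  also have "\<dots> = (\<Sum>l<N. X p j l * Fmat N \<alpha> 0 l k) + (\<Sum>l<N. X (p-1) j l * Fmat N \<alpha> 1 l k)"
    by simp
  also have "(\<Sum>l<N. X p j l * Fmat N \<alpha> 0 l k) = (if k < N then X p j k else 0)"
    by (simp add: Fmat_def if_distrib[where f="\<lambda>x. _ * x"] cong: if_cong)
  also have "(\<Sum>l<N. X (p-1) j l * Fmat N \<alpha> 1 l k) =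
      (\<Sum>l<N. if l = (k+1) mod N then (if k < N then - complex_of_real \<alpha> * X (p-1) j l else 0) else 0)"
    by (rule sum.cong) (auto simp: Fmat_def)
  also have "\<dots> = (if k < N then - complex_of_real \<alpha> * X (p-1) j ((k+1) mod N) else 0)"
    by (cases "k < N") (auto simp: sum.delta')
  finally show ?thesis by auto
qed

lemma smult_FX: assumes X: "inS N X"
  shows "smult N (Fmat N \<alpha>) X p j k =
    (if j < N then X p j k - complex_of_real \<alpha> * X (p-1) ((j+N-1) mod N) k else 0)"
proof -
  have "smult N (Fmat N \<alpha>) X p j k = (\<Sum>q\<in>{0, 1}. \<Sum>l<N. Fmat N \<alpha> q j l * X (p-q) l k)"
  proof (rule smult_I)
    fix q l assume "Fmat N \<alpha> q j l * X (p-q) l k \<noteq> 0"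
    then have "Fmat N \<alpha> q j l \<noteq> 0" by auto
    then have "q = 0 \<or> q = 1" by (rule Fmat_nz)
    then show "q \<in> {0, 1}" by auto
  qed (use X inS_Fmat in \<open>auto simp: inS_iff\<close>)
  also have "\<dots> = (\<Sum>l<N. Fmat N \<alpha> 0 j l * X p l k) + (\<Sum>l<N. Fmat N \<alpha> 1 j l * X (p-1) l k)"
    by simp
  also have "(\<Sum>l<N. Fmat N \<alpha> 0 j l * X p l k) = (if j < N then X p j k else 0)"
    by (cases "j < N") (auto simp: Fmat_def if_distrib[where f="\<lambda>x. x * _"] cong: if_cong)
  also have "(\<Sum>l<N. Fmat N \<alpha> 1 j l * X (p-1) l k) =
      (\<Sum>l<N. if l = (j+N-1) mod N then (if j < N then - complex_of_real \<alpha> * X (p-1) l k else 0) else 0)"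
  proof (rule sum.cong)
    fix l assume l: "l \<in> {..<N}"
    show "Fmat N \<alpha> 1 j l * X (p-1) l k =
      (if l = (j+N-1) mod N then (if j < N then - complex_of_real \<alpha> * X (p-1) l k else 0) else 0)"
    proof (cases "j < N")
      case True then show ?thesis using modpred[OF True, of l] l by (auto simp: Fmat_def)
    next
      case False
      have "(l+1) mod N < N" using l by simp
      then have "j \<noteq> (l+1) mod N" using False by auto
      then show ?thesis using False by (auto simp: Fmat_def)
    qed
  qed simp
  also have "\<dots> = (if j < N then - complex_of_real \<alpha> * X (p-1) ((j+N-1) mod N) k else 0)"
    by (cases "j < N") (auto simp: sum.delta')
  finally show ?thesis by auto
qed

definition Y0 :: "nat \<Rightarrow> real \<Rightarrow> ser" where
  "Y0 N \<alpha> = (\<lambda>p j k. if 0 \<le> p \<and> k < N \<and> j = (k + nat p) mod N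
      then (complex_of_real \<alpha>) ^ (nat p) else 0)"

lemma inS_Y0: "inS N (Y0 N \<alpha>)"
proof -
  have "tw N (Y0 N \<alpha>)" unfolding tw_def
  proof (intro allI impI)
    fix p j k assume "Y0 N \<alpha> p j k \<noteq> 0"
    then have h: "0 \<le> p" "k < N" "j = (k + nat p) mod N" by (auto simp: Y0_def split: if_splits)
    have "int N dvd (int ((k + nat p) mod N) - int (k + nat p))" by (rule dvd_mod_diff)
    moreover have "int ((k + nat p) mod N) - int (k + nat p) = int j - int k - p" using h by simp
    moreover have "j < N" using h by simp
    ultimately show "j < N \<and> k < N \<and> int N dvd (int j - int k - p)" using h by metis
  qed
  moreover have "zb (Y0 N \<alpha>) 0" unfolding zb_def Y0_def by auto
  ultimately show ?thesis using inS_iff by blast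
qed

lemma Y0_right: "smult N (Y0 N \<alpha>) (Fmat N \<alpha>) = sone N"
proof (intro ext)
  fix p j k
  let ?a = "complex_of_real \<alpha>"
  show "smult N (Y0 N \<alpha>) (Fmat N \<alpha>) p j k = sone N p j k"
  proof (cases "k < N")
    case False then show ?thesis by (simp add: smult_XF[OF inS_Y0] sone_def)
  next
    case k: True
    consider "p < 0" | "p = 0" | "p > 0" by linarith
    then show ?thesis
    proof cases
      case 1 then show ?thesis by (simp add: smult_XF[OF inS_Y0]) (simp add: sone_def Y0_def)
    next
      case 2 then show ?thesis using k by (simp add: smult_XF[OF inS_Y0]) (auto simp: sone_def Y0_def)
    next
      case 3
      have np: "nat p = nat (p-1) + 1" using 3 by simp
      have m: "((k+1) mod N + nat (p-1)) mod N = (k + nat p) mod N"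
        by (simp add: mod_add_left_eq np)
      have kk: "(k+1) mod N < N" using k by simp
      have "Y0 N \<alpha> (p-1) j ((k+1) mod N) = (if j = (k + nat p) mod N then ?a ^ nat (p-1) else 0)"
        using 3 kk m by (simp add: Y0_def)
      moreover have "Y0 N \<alpha> p j k = (if j = (k + nat p) mod N then ?a * ?a ^ nat (p-1) else 0)"
        using 3 k np by (simp add: Y0_def)
      ultimately show ?thesis using 3 k by (simp add: smult_XF[OF inS_Y0] sone_def)
    qed
  qed
qed

lemma Y0_left: "smult N (Fmat N \<alpha>) (Y0 N \<alpha>) = sone N"
proof (intro ext)
  fix p j k
  let ?a = "complex_of_real \<alpha>"
  show "smult N (Fmat N \<alpha>) (Y0 N \<alpha>) p j k = sone N p j k"
  proof (cases "j < N")
    case False then show ?thesis by (simp add: smult_FX[OF inS_Y0] sone_def)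
  next
    case j: True
    consider "p < 0" | "p = 0" | "p > 0" by linarith
    then show ?thesis
    proof cases
      case 1 then show ?thesis by (simp add: smult_FX[OF inS_Y0]) (simp add: sone_def Y0_def)
    next
      case 2 then show ?thesis using j by (simp add: smult_FX[OF inS_Y0]) (auto simp: sone_def Y0_def)
    next
      case 3
      have np: "nat p = nat (p-1) + 1" using 3 by simp
      define m where "m = (k + nat (p-1)) mod N"
      have mN: "m < N" using j m_def by simp
      have "j = (m+1) mod N \<longleftrightarrow> m = (j+N-1) mod N" by (rule modpred[OF j mN])
      moreover have "(m+1) mod N = (k + nat p) mod N" unfolding m_def
        by (simp add: mod_Suc_eq np)
      ultimately have e: "(j+N-1) mod N = (k + nat (p-1)) mod N \<longleftrightarrow> j = (k + nat p) mod N"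
        unfolding m_def by auto
      have "Y0 N \<alpha> (p-1) ((j+N-1) mod N) k = (if k < N \<and> j = (k + nat p) mod N then ?a ^ nat (p-1) else 0)"
        using 3 e by (simp add: Y0_def)
      moreover have "Y0 N \<alpha> p j k = (if k < N \<and> j = (k + nat p) mod N then ?a * ?a ^ nat (p-1) else 0)"
        using 3 np by (simp add: Y0_def)
      ultimately show ?thesis using 3 j by (simp add: smult_FX[OF inS_Y0] sone_def)
    qed
  qed
qed

lemma Finv_eq: "Finv N \<alpha> = Y0 N \<alpha>"
  unfolding Finv_def
proof (rule the_equality)
  show "inS N (Y0 N \<alpha>) \<and> smult N (Fmat N \<alpha>) (Y0 N \<alpha>) = sone N \<and> smult N (Y0 N \<alpha>) (Fmat N \<alpha>) = sone N"
    using inS_Y0 Y0_left Y0_right by blast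
next
  fix Y assume h: "inS N Y \<and> smult N (Fmat N \<alpha>) Y = sone N \<and> smult N Y (Fmat N \<alpha>) = sone N"
  have "Y = smult N Y (sone N)" using h smult_sone_right by metis
  also have "\<dots> = smult N Y (smult N (Fmat N \<alpha>) (Y0 N \<alpha>))" by (simp add: Y0_left)
  also have "\<dots> = smult N (smult N Y (Fmat N \<alpha>)) (Y0 N \<alpha>)"
    using h inS_Fmat inS_Y0 smult_assoc by metis
  also have "\<dots> = Y0 N \<alpha>" using h smult_sone_left inS_Y0 by metis
  finally show "Y = Y0 N \<alpha>" .
qed

lemma inS_Finv: "inS N (Finv N \<alpha>)" by (simp add: Finv_eq inS_Y0)
lemma Finv_right: "smult N (Finv N \<alpha>) (Fmat N \<alpha>) = sone N" by (simp add: Finv_eq Y0_right)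
lemma Finv_left: "smult N (Fmat N \<alpha>) (Finv N \<alpha>) = sone N" by (simp add: Finv_eq Y0_left)

lemma predmod: fixes i N :: nat assumes "0 < i" "i < N" shows "(i + N - 1) mod N = i - 1"
proof -
  have "i + N - 1 = (i - 1) + N" using assms by simp
  then have "(i + N - 1) mod N = ((i - 1) + N) mod N" by simp
  also have "\<dots> = (i - 1) mod N" by (rule mod_add_self2)
  also have "\<dots> = i - 1" using assms by simp
  finally show ?thesis .
qed

lemma tele_hi: fixes f :: "nat \<Rightarrow> complex"
  assumes "j < M" "M \<le> N"
  shows "(\<Sum>i\<in>{Suc j..<M}. f i - f ((i+N-1) mod N)) = f (M - 1) - f j"
  using assms
proof (induction M)
  case 0 then show ?case by simp
next
  case (Suc M)
  show ?case
  proof (cases "j < M")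
    case True
    have "(\<Sum>i\<in>{Suc j..<Suc M}. f i - f ((i+N-1) mod N)) =
          (\<Sum>i\<in>{Suc j..<M}. f i - f ((i+N-1) mod N)) + (f M - f ((M+N-1) mod N))"
      using True by simp
    also have "\<dots> = f (M - 1) - f j + (f M - f (M - 1))"
      using Suc True predmod[of M N] by simp
    finally show ?thesis by simp
  next
    case False
    then have "M = j" using Suc by simp
    then show ?thesis by simp
  qed
qed

lemma tele_lo: fixes f :: "nat \<Rightarrow> complex"
  assumes "0 < j" "j \<le> N"
  shows "(\<Sum>i<j. f i - f ((i+N-1) mod N)) = f (j - 1) - f (N - 1)"
  using assms
proof (induction j)
  case 0 then show ?case by simp
next
  case (Suc j)
  show ?case
  proof (cases "j = 0")
    case True
    then show ?thesis using Suc by (simp add: Suc_leI)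
  next
    case False
    have "(\<Sum>i<Suc j. f i - f ((i+N-1) mod N)) = (\<Sum>i<j. f i - f ((i+N-1) mod N)) + (f j - f ((j+N-1) mod N))"
      by simp
    also have "\<dots> = f (j - 1) - f (N - 1) + (f j - f (j - 1))"
      using Suc False predmod[of j N] by simp
    finally show ?thesis by simp
  qed
qed

lemma tele: fixes f :: "nat \<Rightarrow> complex"
  assumes j: "j < N"
  shows "(\<Sum>i<N. of_int (sgn (int i - int j)) * (f i - f ((i+N-1) mod N)))
     = 2 * f (N - 1) - f j - f ((j+N-1) mod N)"
proof -
  let ?g = "\<lambda>i. of_int (sgn (int i - int j)) * (f i - f ((i+N-1) mod N))"
  have "{..<N} = {..<j} \<union> {j..<N}" using j by auto
  then have "(\<Sum>i<N. ?g i) = (\<Sum>i<j. ?g i) + (\<Sum>i\<in>{j..<N}. ?g i)"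
    by (simp add: sum.union_disjoint ivl_disj_int(2))
  also have "(\<Sum>i\<in>{j..<N}. ?g i) = ?g j + (\<Sum>i\<in>{Suc j..<N}. ?g i)"
    using j by (simp add: sum.atLeast_Suc_lessThan)
  also have "(\<Sum>i\<in>{Suc j..<N}. ?g i) = (\<Sum>i\<in>{Suc j..<N}. f i - f ((i+N-1) mod N))"
    by (rule sum.cong) auto
  also have "(\<Sum>i<j. ?g i) = - (\<Sum>i<j. f i - f ((i+N-1) mod N))"
    by (simp add: sum_negf[symmetric])
  finally have eq: "(\<Sum>i<N. ?g i) = - (\<Sum>i<j. f i - f ((i+N-1) mod N)) + (\<Sum>i\<in>{Suc j..<N}. f i - f ((i+N-1) mod N))"
    by simp
  have hi: "(\<Sum>i\<in>{Suc j..<N}. f i - f ((i+N-1) mod N)) = f (N - 1) - f j"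
    using tele_hi[OF j] by simp
  show ?thesis
  proof (cases "j = 0")
    case True
    have "(N - 1) mod N = N - 1" using j by simp
    then show ?thesis using eq hi True by simp
  next
    case False
    then show ?thesis using eq hi tele_lo[of j N] j predmod[of j N] by simp
  qed
qed

lemma dvd_eq_nat: fixes j k N :: nat
  assumes "int N dvd (int j - int k)" "j < N" "k < N" shows "j = k"
proof (rule ccontr)
  assume ne: "j \<noteq> k"
  show False
  proof (cases "j > k")
    case True
    then have "0 < int j - int k" "int j - int k < int N" using assms by auto
    then show False using assms(1) zdvd_not_zless by blast
  next
    case False
    then have "0 < int k - int j" "int k - int j < int N" using assms ne by auto
    moreover have "int N dvd (int k - int j)" using assms(1)
      by (metis dvd_minus_iff minus_diff_eq)
    ultimately show False using zdvd_not_zless by blast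
  qed
qed

lemma twD: "inS N E \<Longrightarrow> E p j k \<noteq> 0 \<Longrightarrow> int N dvd (int j - int k - p)"
  unfolding inS_def by blast

lemma E_off1: assumes E: "inS N E" and "j < N" "k < N" "j \<noteq> k"
  shows "E (-1) ((j+N-1) mod N) k = 0"
proof (rule ccontr)
  let ?j = "(j+N-1) mod N"
  assume "E (-1) ?j k \<noteq> 0"
  then have d1: "int N dvd (int ?j - int k - (-1))" using twD[OF E] by blast
  have jj: "?j < N" using assms by simp
  have "j = (?j + 1) mod N" using modpred[OF assms(2) jj] by simp
  then have d2: "int N dvd (int j - int (?j + 1))" using dvd_mod_diff[of N "?j+1"] by simp
  have "int N dvd ((int ?j - int k - (-1)) + (int j - int (?j + 1)))" using d1 d2 by (rule dvd_add)
  moreover have "(int ?j - int k - (-1)) + (int j - int (?j + 1)) = int j - int k" by simp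
  ultimately have "int N dvd (int j - int k)" by metis
  then show False using dvd_eq_nat assms by blast
qed

lemma E_off2: assumes E: "inS N E" and "j < N" "k < N" "j \<noteq> k"
  shows "E (-1) j ((k+1) mod N) = 0"
proof (rule ccontr)
  let ?k = "(k+1) mod N"
  assume "E (-1) j ?k \<noteq> 0"
  then have d1: "int N dvd (int j - int ?k - (-1))" using twD[OF E] by blast
  have d2: "int N dvd (int ?k - int (k + 1))" using dvd_mod_diff[of N "k+1"] by simp
  have "int N dvd ((int j - int ?k - (-1)) + (int ?k - int (k + 1)))" using d1 d2 by (rule dvd_add)
  moreover have "(int j - int ?k - (-1)) + (int ?k - int (k + 1)) = int j - int k" by simp
  ultimately have "int N dvd (int j - int k)" by metis
  then show False using dvd_eq_nat assms by blast
qed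

lemma Wdiff: assumes E: "inS N E" and j: "j < N"
  defines "e \<equiv> (\<lambda>m. E (-1) m ((m+1) mod N))"
  shows "Wop N (smult N E (Fmat N \<alpha>)) 0 j j - Wop N (smult N (Fmat N \<alpha>) E) 0 j j
       = - complex_of_real \<alpha> * (2 * e (N - 1) - e j - e ((j+N-1) mod N))"
proof -
  let ?a = "complex_of_real \<alpha>"
  have "Wop N (smult N E (Fmat N \<alpha>)) 0 j j - Wop N (smult N (Fmat N \<alpha>) E) 0 j j
     = (\<Sum>i<N. of_int (sgn (int i - int j)) * (smult N E (Fmat N \<alpha>) 0 i i - smult N (Fmat N \<alpha>) E 0 i i))"
    using j by (simp add: Wop_def sum_subtractf[symmetric] algebra_simps)
  also have "\<dots> = (\<Sum>i<N. of_int (sgn (int i - int j)) * (- ?a * (e i - e ((i+N-1) mod N))))"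
  proof (rule sum.cong)
    fix i assume i: "i \<in> {..<N}"
    let ?l = "(i+N-1) mod N"
    have l: "?l < N" using i by simp
    have "(?l + 1) mod N = i" using modpred[OF _ l, of i] i by simp
    then have "e ?l = E (-1) ?l i" unfolding e_def by simp
    then show "of_int (sgn (int i - int j)) * (smult N E (Fmat N \<alpha>) 0 i i - smult N (Fmat N \<alpha>) E 0 i i)
      = of_int (sgn (int i - int j)) * (- ?a * (e i - e ?l))"
      using i by (simp add: smult_XF[OF E] smult_FX[OF E] e_def algebra_simps)
  qed simp
  also have "\<dots> = - ?a * (\<Sum>i<N. of_int (sgn (int i - int j)) * (e i - e ((i+N-1) mod N)))"
    by (simp add: sum_distrib_left algebra_simps)
  also have "\<dots> = - ?a * (2 * e (N - 1) - e j - e ((j+N-1) mod N))"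
    using tele[OF j, of e] by simp
  finally show ?thesis .
qed

definition scal :: "nat \<Rightarrow> complex \<Rightarrow> ser" where
  "scal N c = (\<lambda>p j k. if p = 0 \<and> j = k \<and> j < N then c else 0)"

definition cK :: "nat \<Rightarrow> real \<Rightarrow> ser \<Rightarrow> complex" where
  "cK N \<alpha> E = - 2 * complex_of_real \<alpha> * E (-1) (N-1) ((N - 1 + 1) mod N)"

lemma Rop_val: "Rop E p j k = (if 0 \<le> p then E p j k else - E p j k)"
  by (simp add: Rop_def sdiff_def Pge0_def Plt0_def)

lemma K1: assumes E: "inS N E"
  shows "sadd (A1op N (smult N E (Fmat N \<alpha>))) (Sop N (smult N (Fmat N \<alpha>) E))
       = sadd (smult N (Rop E) (Fmat N \<alpha>)) (scal N (cK N \<alpha> E))"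
proof (intro ext)
  fix p j k
  let ?a = "complex_of_real \<alpha>"
  let ?e = "\<lambda>m. E (-1) m ((m+1) mod N)"
  note XF = smult_XF[OF E] and FX = smult_FX[OF E] and RF = smult_XF[OF inS_Rop[OF E]]
  show "sadd (A1op N (smult N E (Fmat N \<alpha>))) (Sop N (smult N (Fmat N \<alpha>) E)) p j k
       = sadd (smult N (Rop E) (Fmat N \<alpha>)) (scal N (cK N \<alpha> E)) p j k"
  proof (cases "p = 0")
    case False
    then show ?thesis
      by (simp add: A1op_def Sop_def sadd_def sdiff_def R0op_def Pgt0_def Plt0_def P0_def
          Wop_def scal_def RF Rop_val XF)
  next
    case p: True
    have L: "sadd (A1op N (smult N E (Fmat N \<alpha>))) (Sop N (smult N (Fmat N \<alpha>) E)) 0 j k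
      = (Wop N (smult N E (Fmat N \<alpha>)) 0 j k - Wop N (smult N (Fmat N \<alpha>) E) 0 j k)
        + smult N (Fmat N \<alpha>) E 0 j k"
      by (simp add: A1op_def Sop_def sadd_def sdiff_def R0op_def Pgt0_def Plt0_def P0_def)
    have R: "sadd (smult N (Rop E) (Fmat N \<alpha>)) (scal N (cK N \<alpha> E)) 0 j k
      = (if k < N then E 0 j k + ?a * E (-1) j ((k+1) mod N) else 0) + scal N (cK N \<alpha> E) 0 j k"
      by (simp add: sadd_def RF Rop_val)
    show ?thesis
    proof (cases "j = k \<and> j < N")
      case False
      have W0: "Wop N X 0 j k = 0" for X using False by (auto simp: Wop_def)
      show ?thesis
      proof (cases "j < N \<and> k < N")
        case True
        then show ?thesis using p L R W0 False E_off1[OF E, of j k] E_off2[OF E, of j k]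
          by (simp add: FX scal_def)
      next
        case False
        then show ?thesis using p L R W0 inS_jN[OF E] inS_kN[OF E]
          by (auto simp add: FX scal_def)
      qed
    next
      case True
      then have jk: "j = k" and j: "j < N" by auto
      have l: "(j+N-1) mod N < N" using j by simp
      have "((j+N-1) mod N + 1) mod N = j" using modpred[OF j l] by simp
      then have FE: "smult N (Fmat N \<alpha>) E 0 j j = E 0 j j - ?a * ?e ((j+N-1) mod N)"
        using j by (simp add: FX)
      have NN: "(N - 1 + 1) mod N = 0" using j by simp
      define w where "w = Wop N (smult N E (Fmat N \<alpha>)) 0 j j - Wop N (smult N (Fmat N \<alpha>) E) 0 j j"
      define x0 where "x0 = E 0 j j"
      define ej where "ej = ?e j"
      define ej' where "ej' = ?e ((j+N-1) mod N)"
      define en where "en = E (-1) (N-1) 0"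
      have Wd: "w = - ?a * (2 * en - ej - ej')"
        unfolding w_def en_def ej_def ej'_def using Wdiff[OF E j, of \<alpha>] NN by simp
      have L0: "sadd (A1op N (smult N E (Fmat N \<alpha>))) (Sop N (smult N (Fmat N \<alpha>) E)) 0 j j
         = w + (x0 - ?a * ej')" using L jk FE unfolding w_def x0_def ej'_def by simp
      have R0: "sadd (smult N (Rop E) (Fmat N \<alpha>)) (scal N (cK N \<alpha> E)) 0 j j
         = x0 + ?a * ej + (- 2 * ?a * en)" using R jk j NN unfolding x0_def ej_def en_def
        by (simp add: scal_def cK_def)
      show ?thesis unfolding p jk[symmetric] L0 R0 Wd by (simp add: algebra_simps)
    qed
  qed
qed

lemma K2: assumes E: "inS N E"
  shows "sadd (A2op N (smult N (Fmat N \<alpha>) E)) (Sstar N (smult N E (Fmat N \<alpha>)))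
       = sadd (smult N (Fmat N \<alpha>) (Rop E)) (scal N (cK N \<alpha> E))"
proof (intro ext)
  fix p j k
  let ?a = "complex_of_real \<alpha>"
  let ?e = "\<lambda>m. E (-1) m ((m+1) mod N)"
  note XF = smult_XF[OF E] and FX = smult_FX[OF E] and FR = smult_FX[OF inS_Rop[OF E]]
  show "sadd (A2op N (smult N (Fmat N \<alpha>) E)) (Sstar N (smult N E (Fmat N \<alpha>))) p j k
       = sadd (smult N (Fmat N \<alpha>) (Rop E)) (scal N (cK N \<alpha> E)) p j k"
  proof (cases "p = 0")
    case False
    then show ?thesis
      by (simp add: A2op_def Sstar_def sadd_def sdiff_def R0op_def Pgt0_def Plt0_def P0_def
          Wop_def scal_def FR Rop_val FX)
  next
    case p: True
    have L: "sadd (A2op N (smult N (Fmat N \<alpha>) E)) (Sstar N (smult N E (Fmat N \<alpha>))) 0 j k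
      = (Wop N (smult N E (Fmat N \<alpha>)) 0 j k - Wop N (smult N (Fmat N \<alpha>) E) 0 j k)
        + smult N E (Fmat N \<alpha>) 0 j k"
      by (simp add: A2op_def Sstar_def sadd_def sdiff_def R0op_def Pgt0_def Plt0_def P0_def)
    have R: "sadd (smult N (Fmat N \<alpha>) (Rop E)) (scal N (cK N \<alpha> E)) 0 j k
      = (if j < N then E 0 j k + ?a * E (-1) ((j+N-1) mod N) k else 0) + scal N (cK N \<alpha> E) 0 j k"
      by (simp add: sadd_def FR Rop_val)
    show ?thesis
    proof (cases "j = k \<and> j < N")
      case False
      have W0: "Wop N X 0 j k = 0" for X using False by (auto simp: Wop_def)
      show ?thesis
      proof (cases "j < N \<and> k < N")
        case True
        then show ?thesis using p L R W0 False E_off1[OF E, of j k] E_off2[OF E, of j k]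
          by (simp add: XF scal_def)
      next
        case False
        then show ?thesis using p L R W0 inS_jN[OF E] inS_kN[OF E]
          by (auto simp add: XF scal_def)
      qed
    next
      case True
      then have jk: "j = k" and j: "j < N" by auto
      have l: "(j+N-1) mod N < N" using j by simp
      have "((j+N-1) mod N + 1) mod N = j" using modpred[OF j l] by simp
      then have FE: "E (-1) ((j+N-1) mod N) j = ?e ((j+N-1) mod N)" by simp
      have NN: "(N - 1 + 1) mod N = 0" using j by simp
      define w where "w = Wop N (smult N E (Fmat N \<alpha>)) 0 j j - Wop N (smult N (Fmat N \<alpha>) E) 0 j j"
      define x0 where "x0 = E 0 j j"
      define ej where "ej = ?e j"
      define ej' where "ej' = ?e ((j+N-1) mod N)"
      define en where "en = E (-1) (N-1) 0"
      have Wd: "w = - ?a * (2 * en - ej - ej')"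
        unfolding w_def en_def ej_def ej'_def using Wdiff[OF E j, of \<alpha>] NN by simp
      have L0: "sadd (A2op N (smult N (Fmat N \<alpha>) E)) (Sstar N (smult N E (Fmat N \<alpha>))) 0 j j
         = w + (x0 - ?a * ej)" using L jk j unfolding w_def x0_def ej_def by (simp add: XF)
      have R0: "sadd (smult N (Fmat N \<alpha>) (Rop E)) (scal N (cK N \<alpha> E)) 0 j j
         = x0 + ?a * ej' + (- 2 * ?a * en)" using R jk j NN FE unfolding x0_def ej'_def en_def
        by (simp add: scal_def cK_def)
      show ?thesis unfolding p jk[symmetric] L0 R0 Wd by (simp add: algebra_simps)
    qed
  qed
qed

lemma scal_eq: "scal N c = sscale c (sone N)"
  unfolding scal_def sscale_def sone_def by (intro ext) simp
lemma inS_scal: "inS N (scal N c)"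
  unfolding scal_eq by (intro inS_sscale inS_sone)
lemma smult_scal_right: "inS N T \<Longrightarrow> smult N T (scal N c) = sscale c T"
  unfolding scal_eq by (simp add: smult_sscale_right inS_sone smult_sone_right)
lemma smult_scal_left: "inS N T \<Longrightarrow> smult N (scal N c) T = sscale c T"
  unfolding scal_eq by (simp add: smult_sscale_left inS_sone smult_sone_left)

lemmas inS_intros = smult_inS inS_sadd inS_sdiff inS_sscale inS_Rop inS_A1 inS_A2 inS_S inS_Sstar
  inS_Fmat inS_Finv inS_scal

lemma cyc1: "inS N Z \<Longrightarrow> inS N Y \<Longrightarrow> inS N T \<Longrightarrow>
  spair N Z (smult N Y T) = spair N Y (smult N T Z)"
  by (metis spair_sym spair_assoc smult_inS)
lemma cyc2: "inS N Z \<Longrightarrow> inS N Y \<Longrightarrow> inS N T \<Longrightarrow>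
  spair N Z (smult N T Y) = spair N Y (smult N Z T)"
  by (metis spair_sym spair_assoc smult_inS)

lemma is_grad_some: assumes "\<exists>G. is_grad N D f L G" shows "is_grad N D f L (grad N D f L)"
  using assms unfolding grad_def by (rule someI_ex)

theorem mainTheorem9:
  fixes N :: nat and \<alpha> :: real and \<phi> :: "ser \<Rightarrow> complex"
  assumes N2: "N \<ge> 2"
    and grad_ex: "\<forall>L. inS N L \<longrightarrow> (\<exists>G. is_grad N (inS N) \<phi> L G)"
    and ad_inv: "\<forall>L. inS N L \<longrightarrow>
                   smult N (grad N (inS N) \<phi> L) L = smult N L (grad N (inS N) \<phi> L)"
    and psi_eq: "\<forall>T. inG N T \<longrightarrow> \<phi> (smult N T (Finv N \<alpha>)) = \<phi> (smult N (Finv N \<alpha>) T)"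
  shows "\<forall>T f. inG N T \<and> (\<exists>G. is_grad N (inG N) f T G) \<longrightarrow>
     (let \<psi> = (\<lambda>T'. \<phi> (smult N T' (Finv N \<alpha>)));
          d\<phi> = (\<lambda>Y. smult N Y (grad N (inS N) \<phi> Y));
          C1 = sscale (1/2) (smult N (Fmat N \<alpha>)
                 (Rop (smult N (Finv N \<alpha>) (d\<phi> (smult N T (Finv N \<alpha>))))));
          C2 = sscale (1/2) (smult N
                 (Rop (smult N (d\<phi> (smult N (Finv N \<alpha>) T)) (Finv N \<alpha>))) (Fmat N \<alpha>))
      in PB2 N \<psi> f T = spair N (grad N (inG N) f T) (sdiff (smult N T C2) (smult N C1 T)))"

proof (intro allI impI)
  fix T f assume h: "inG N T \<and> (\<exists>G. is_grad N (inG N) f T G)"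
  then have TG: "inG N T" and TS: "inS N T" and fG: "\<exists>G. is_grad N (inG N) f T G"
    by (auto simp: inG_def)
  define F where "F = Fmat N \<alpha>"
  define Fi where "Fi = Finv N \<alpha>"
  define \<psi> where "\<psi> = (\<lambda>T'. \<phi> (smult N T' Fi))"
  define U where "U = smult N T Fi"
  define V where "V = smult N Fi T"
  define gU where "gU = grad N (inS N) \<phi> U"
  define gV where "gV = grad N (inS N) \<phi> V"
  have FS: "inS N F" and FiS: "inS N Fi" unfolding F_def Fi_def by (rule inS_Fmat inS_Finv)+
  have US: "inS N U" and VS: "inS N V" unfolding U_def V_def using TS FiS by (auto intro: smult_inS)
  have gUg: "is_grad N (inS N) \<phi> U gU" unfolding gU_def using grad_ex US by (intro is_grad_some) blast
  have gVg: "is_grad N (inS N) \<phi> V gV" unfolding gV_def using grad_ex VS by (intro is_grad_some) blast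
  have gUS: "inS N gU" using gUg is_grad_def by blast
  have gVS: "inS N gV" using gVg is_grad_def by blast
  have MS: "inS N M" if "inG N M" for M using that inG_inS by blast
  have XU: "is_grad N (inG N) \<psi> T (smult N Fi gU)"
    unfolding is_grad_def
  proof (intro conjI allI impI)
    show "inS N (smult N Fi gU)" using FiS gUS by (rule smult_inS)
    fix M assume M: "inG N M"
    have MFS: "inS N (smult N M Fi)" using MS[OF M] FiS by (rule smult_inS)
    have fe: "(\<lambda>e::real. \<psi> (sadd T (sscale (complex_of_real e) M)))
        = (\<lambda>e. \<phi> (sadd U (sscale (complex_of_real e) (smult N M Fi))))"
      unfolding \<psi>_def U_def
      by (simp add: smult_sadd_left smult_sscale_left TS MS[OF M] FiS inS_sscale)
    have "spair N gU (smult N M Fi) = spair N (smult N Fi gU) M"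
      by (metis spair_sym spair_assoc smult_inS MS[OF M] FiS gUS)
    then show "((\<lambda>e::real. \<psi> (sadd T (sscale (complex_of_real e) M))) has_vector_derivative
        spair N (smult N Fi gU) M) (at 0)"
      using gUg MFS unfolding fe is_grad_def by metis
  qed
  have XV: "is_grad N (inG N) \<psi> T (smult N gV Fi)"
    unfolding is_grad_def
  proof (intro conjI allI impI)
    show "inS N (smult N gV Fi)" using gVS FiS by (rule smult_inS)
    fix M assume M: "inG N M"
    have MFS: "inS N (smult N Fi M)" using FiS MS[OF M] by (rule smult_inS)
    have fe: "(\<lambda>e::real. \<psi> (sadd T (sscale (complex_of_real e) M)))
        = (\<lambda>e. \<phi> (sadd V (sscale (complex_of_real e) (smult N Fi M))))"
    proof
      fix e :: real
      have "inG N (sadd T (sscale (complex_of_real e) M))" using TG M by (rule inG_sadd_sscale)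
      then have "\<psi> (sadd T (sscale (complex_of_real e) M)) = \<phi> (smult N Fi (sadd T (sscale (complex_of_real e) M)))"
        unfolding \<psi>_def Fi_def using psi_eq by blast
      also have "\<dots> = \<phi> (sadd V (sscale (complex_of_real e) (smult N Fi M)))"
        unfolding V_def
        by (simp add: smult_sadd_right smult_sscale_right TS MS[OF M] FiS inS_sscale)
      finally show "\<psi> (sadd T (sscale (complex_of_real e) M)) = \<phi> (sadd V (sscale (complex_of_real e) (smult N Fi M)))" .
    qed
    have "spair N gV (smult N Fi M) = spair N (smult N gV Fi) M"
      by (metis spair_assoc MS[OF M] FiS gVS)
    then show "((\<lambda>e::real. \<psi> (sadd T (sscale (complex_of_real e) M))) has_vector_derivative
        spair N (smult N gV Fi) M) (at 0)"
      using gVg MFS unfolding fe is_grad_def by metis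
  qed
  have UV: "smult N Fi gU = smult N gV Fi" using grad_unique[OF XU XV] .
  have Xeq: "grad N (inG N) \<psi> T = smult N gV Fi" using grad_eqI[OF XV] .
  define Y where "Y = grad N (inG N) f T"
  have YS: "inS N Y" unfolding Y_def using is_grad_some[OF fG] is_grad_def by blast
  define G0 where "G0 = smult N T gV"
  have G0S: "inS N G0" unfolding G0_def using TS gVS by (rule smult_inS)
  define E where "E = smult N Fi (smult N G0 Fi)"
  have ES: "inS N E" unfolding E_def using FiS G0S by (intro smult_inS)
  have FFi: "smult N F Fi = sone N" and FiF: "smult N Fi F = sone N"
    unfolding F_def Fi_def by (rule Finv_left Finv_right)+
  have dX: "smult N T (smult N gV Fi) = smult N F E"
  proof -
    have "smult N F E = smult N (smult N F Fi) (smult N G0 Fi)"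
      unfolding E_def using FS FiS G0S by (simp add: smult_assoc smult_inS)
    also have "\<dots> = smult N G0 Fi" using FFi G0S FiS by (simp add: smult_sone_left smult_inS)
    finally show ?thesis unfolding G0_def using TS gVS FiS by (simp add: smult_assoc)
  qed
  have dX': "smult N (smult N gV Fi) T = smult N E F"
  proof -
    have "smult N (smult N gV Fi) T = smult N gV V" unfolding V_def using gVS FiS TS by (simp add: smult_assoc)
    also have "\<dots> = smult N V gV" using ad_inv VS unfolding gV_def by metis
    also have "\<dots> = smult N Fi G0" unfolding V_def G0_def using gVS FiS TS by (simp add: smult_assoc)
    also have "\<dots> = smult N Fi (smult N G0 (smult N Fi F))" using FiF G0S by (simp add: smult_sone_right)
    also have "\<dots> = smult N E F" unfolding E_def using FiS G0S FS by (simp add: smult_assoc smult_inS)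
    finally show ?thesis .
  qed
  have C1E: "smult N Fi (smult N U gU) = E"
  proof -
    have "smult N U gU = smult N T (smult N Fi gU)" unfolding U_def using TS FiS gUS by (simp add: smult_assoc)
    also have "\<dots> = smult N G0 Fi" unfolding UV G0_def using TS FiS gVS by (simp add: smult_assoc)
    finally show ?thesis unfolding E_def by simp
  qed
  have C2E: "smult N (smult N V gV) Fi = E"
  proof -
    have "smult N V gV = smult N Fi G0" unfolding V_def G0_def using gVS FiS TS by (simp add: smult_assoc)
    then show ?thesis unfolding E_def using FiS G0S by (simp add: smult_assoc)
  qed
  define K where "K = scal N (cK N \<alpha> E)"
  have KS: "inS N K" unfolding K_def by (rule inS_scal)
  have K1': "sadd (A1op N (smult N E F)) (Sop N (smult N F E)) = sadd (smult N (Rop E) F) K"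
    unfolding F_def K_def using K1[OF ES] .
  have K2': "sadd (A2op N (smult N F E)) (Sstar N (smult N E F)) = sadd (smult N F (Rop E)) K"
    unfolding F_def K_def using K2[OF ES] .
  have TK: "smult N T K = smult N K T" unfolding K_def using TS by (simp add: smult_scal_left smult_scal_right)
  have EF: "inS N (smult N E F)" and FE: "inS N (smult N F E)" using ES FS by (auto intro: smult_inS)
  have RES: "inS N (Rop E)" using ES by (rule inS_Rop)
  have key: "PB2 N \<psi> f T = spair N Y (sdiff (smult N T (sscale (1/2) (smult N (Rop E) F)))
                                              (smult N (sscale (1/2) (smult N F (Rop E))) T))"
  proof -
    let ?P = "A1op N (smult N E F)" and ?Q = "Sop N (smult N F E)"
    let ?P' = "A2op N (smult N F E)" and ?Q' = "Sstar N (smult N E F)"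
    have PS: "inS N ?P" "inS N ?Q" "inS N ?P'" "inS N ?Q'" using EF FE by (auto intro: inS_intros)
    have "PB2 N \<psi> f T = (1/2) * spair N ?P (smult N Y T) - (1/2) * spair N ?P' (smult N T Y)
         + (1/2) * spair N ?Q (smult N Y T) - (1/2) * spair N ?Q' (smult N T Y)"
      unfolding PB2_def Let_def Xeq dX dX' Y_def[symmetric] ..
    also have "\<dots> = (1/2) * (spair N Y (smult N T ?P) + spair N Y (smult N T ?Q))
         - (1/2) * (spair N Y (smult N ?P' T) + spair N Y (smult N ?Q' T))"
      using PS YS TS by (simp add: cyc1 cyc2 algebra_simps)
    also have "\<dots> = (1/2) * spair N Y (smult N T (sadd ?P ?Q)) - (1/2) * spair N Y (smult N (sadd ?P' ?Q') T)"
      using PS YS TS by (simp add: smult_sadd_left smult_sadd_right spair_sadd_right smult_inS)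
    also have "\<dots> = (1/2) * spair N Y (smult N T (sadd (smult N (Rop E) F) K))
        - (1/2) * spair N Y (smult N (sadd (smult N F (Rop E)) K) T)"
      unfolding K1' K2' ..
    also have "\<dots> = (1/2) * spair N Y (smult N T (smult N (Rop E) F)) - (1/2) * spair N Y (smult N (smult N F (Rop E)) T)"
      using RES FS KS YS TS TK
      by (simp add: smult_sadd_left smult_sadd_right spair_sadd_right smult_inS algebra_simps)
    also have "\<dots> = spair N Y (sdiff (smult N T (sscale (1/2) (smult N (Rop E) F)))
                                              (smult N (sscale (1/2) (smult N F (Rop E))) T))"
      using RES FS YS TS
      by (simp add: smult_sscale_left smult_sscale_right spair_sdiff_right spair_sscale_right
          smult_inS inS_sscale algebra_simps)
    finally show ?thesis .
  qed
  show "let \<psi> = (\<lambda>T'. \<phi> (smult N T' (Finv N \<alpha>)));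
          d\<phi> = (\<lambda>Y. smult N Y (grad N (inS N) \<phi> Y));
          C1 = sscale (1/2) (smult N (Fmat N \<alpha>)
                 (Rop (smult N (Finv N \<alpha>) (d\<phi> (smult N T (Finv N \<alpha>))))));
          C2 = sscale (1/2) (smult N
                 (Rop (smult N (d\<phi> (smult N (Finv N \<alpha>) T)) (Finv N \<alpha>))) (Fmat N \<alpha>))
      in PB2 N \<psi> f T = spair N (grad N (inG N) f T) (sdiff (smult N T C2) (smult N C1 T))"
    unfolding Let_def using key C1E C2E
    unfolding \<psi>_def Fi_def F_def Y_def U_def V_def gU_def gV_def by simp
qed

end
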